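(* Let $g$ be a semisimple complex Lie algebra of dimension $24$ arising as the Lie algebra of an $\mathcal{N}=1$ structure on $F_{24}$ (see context), with rank $r$, Cartan subalgebra $h$, root system $\Delta_g$, positive roots $\Delta_g^+$, Weyl vector $\rho$, root lattice $Q_g$ and coroot lattice $Q_g^\vee$. Let $\hat\Delta\subset \mathbb{Z}\times\mathbb{Z}\times \tilde Q_g$ be the set of roots defined in the context, and for $\gamma=(m,n,w)\in\hat\Delta$ and $L\in\mathbb{Z}_{>0}$, $\eta\in h$, put $\gamma(\mathsf{h}):=L(m+n)+w(\eta)$, where $\mathsf{h}:=-LP^+-LP^-+\eta$ and $w(\eta)$ is the natural pairing of $w\in h^*$ with $\eta\in h$. Let $\eta\in Q_g^\vee\subset h$ satisfy $\alpha(\eta)\neq 0$ for all $\alpha\in\Delta_g$. Then there exists a positive integer $L$ such that $\mathsf{h}=-LP^+-LP^-+\eta$ satisfies: 1. if $\gamma=(m,n,w)\in\hat\Delta$, then $\gamma(\mathsf{h})\neq 0$; 2. if $\gamma=(m,n,w)\in\hat\Delta$ with $m>0$ or $n>0$, then $\gamma(\mathsf{h})>0$; 3. for every $N>0$ there are only finitely many $\gamma\in\hat\Delta$ with $0<|\gamma(\mathsf{h})|<N$; 4. if $\alpha=(m,n,w)\in\hat\Delta$ satisfies $\langle\alpha|\alpha\rangle:=-2mn+(w|w)=0$, and $\gamma=(0,0,w')\in\hat\Delta$, then $|\alpha(\mathsf{h})|>|\gamma(\mathsf{h})|$.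
   Context: $F_{24}$ is the super vertex operator algebra of $24$ chiral free fermions $\lambda^1,\dots,\lambda^{24}$ with OPE $\lambda^i(z)\lambda^j(w)\sim\delta^{ij}/(z-w)$ and stress tensor $T=-\frac12\sum_i:\lambda^i\partial\lambda^i:$ (central charge $12$). An $\mathcal{N}=1$ structure is a supercurrent $G=-\frac{i}{6}\sum_{i,j,k}c_{ijk}:\lambda^i\lambda^j\lambda^k:$ with $c_{ijk}$ totally antisymmetric, satisfying $\sum_k(c_{ijk}c_{klm}+c_{lik}c_{kjm}+c_{jlk}c_{kim})=0$ and $\sum_{k,l}c_{ikl}c_{jkl}=2\delta_{ij}$; then $c_{ijk}$ are structure constants ($[t^j,t^k]=ic_{jkl}t^l$) of a $24$-dimensional semisimple Lie algebra $g$, realized by the zero modes of the currents $J^a=-\frac i2\sum c_{ajk}:\lambda^j\lambda^k:$, and the $\lambda^a$ transform in the adjoint of $g$. The Killing form is normalized as $(t|u)=\frac12\mathrm{Tr}(\mathrm{ad}\,t\,\mathrm{ad}\,u)$ (so long roots of a simple component $g_k$ have squared length $2/h^\vee_{g_k}$); it is used to identify $h\cong h^*$. $Q_g=\sum\mathbb{Z}\alpha_i$, $Q_g^\vee=\sum\mathbb{Z}\alpha_i^\vee$, $P_g=(Q_g^\vee)^*$, $\tilde Q_g:=Q_g\cup(\rho+Q_g)$, $\rho=\frac12\sum_{\alpha\in\Delta_g^+}\alpha$. Root multiplicities. Let $c_{NS-}(n,w)$, $n\in\mathbb{Z}$, $w\in P_g$, be the dimension of the subspace of $F_{24}$ of odd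 fermion number with $L_0-\frac12=n$ and $h$-weight $w$; equivalently $\sum_{n,w}c_{NS-}(n,w)q^ne^{w}$ is the part with integral powers of $q$ of $q^{-1/2}\prod_{n\ge1}(1+q^{n-1/2})^r\prod_{\alpha\in\Delta_g^+}(1+q^{n-1/2}e^{\alpha})(1+q^{n-1/2}e^{-\alpha})$. Let $c_{R+}(n,w)$ be the dimension of the positive fermion number subspace of the canonically twisted (Ramond) module of $F_{24}$ with $L_0-\frac12=n$ and weight $w$; equivalently $\sum c_{R+}(n,w)q^ne^w=\frac12\,2^{r/2}e^{-\rho}q\prod_{m\ge1}(1+q^m)^r\prod_{\alpha\in\Delta_g^+}\prod_{n\ge0}(1+q^ne^{\alpha})\prod_{k\ge1}(1+q^ke^{-\alpha})$. The set of roots is $\hat\Delta:=\{(m,n,w)\in\mathbb{Z}\times\mathbb{Z}\times\tilde Q_g\setminus\{0\}:\ (w\in Q_g\text{ and }c_{NS-}(mn,w)\neq0)\text{ or }(w\in\rho+Q_g\text{ and }c_{R+}(mn,w)\neq0)\}$. $P^+,P^-$ are formal symbols (momentum operators); the bilinear form on $\mathbb{Z}^2\times\tilde Q_g$ is $\langle(m,n,w)|(m',n',w')\rangle=-(mn'+m'n)+(w|w')$. *)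

theory Defs
  imports "HOL-Analysis.Analysis"
begin

text \<open>The Cartan subalgebra h is modelled (over the reals, i.e. its real span of coroots)
  as real^'r, with r = CARD('r) the rank. Elements of h^* (weights, roots) are also
  represented in real^'r, the natural pairing w(t) being the inner product w \<bullet> t.\<close>

text \<open>Abstract (reduced, crystallographic) root system in h^*, spanning: exactly the
  root systems of complex semisimple Lie algebras with Cartan subalgebra h.\<close>
definition is_root_system :: "(real^'r) set \<Rightarrow> bool" where
  "is_root_system \<Delta> \<longleftrightarrow> finite \<Delta> \<and> 0 \<notin> \<Delta> \<and> span \<Delta> = UNIV \<and>
     (\<forall>\<alpha>\<in>\<Delta>. \<forall>c::real. c *\<^sub>R \<alpha> \<in> \<Delta> \<longrightarrow> c = 1 \<or> c = -1) \<and>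
     (\<forall>\<alpha>\<in>\<Delta>. \<exists>a. \<alpha> \<bullet> a = 2 \<and>
        (\<forall>\<beta>\<in>\<Delta>. \<beta> \<bullet> a \<in> \<int> \<and> \<beta> - (\<beta> \<bullet> a) *\<^sub>R \<alpha> \<in> \<Delta>))"

definition is_pos_system :: "(real^'r) set \<Rightarrow> (real^'r) set \<Rightarrow> bool" where
  "is_pos_system \<Delta> \<Delta>p \<longleftrightarrow> (\<exists>v. (\<forall>\<alpha>\<in>\<Delta>. \<alpha> \<bullet> v \<noteq> 0) \<and> \<Delta>p = {\<alpha>\<in>\<Delta>. \<alpha> \<bullet> v > 0})"

definition weyl_vector :: "(real^'r) set \<Rightarrow> real^'r" where
  "weyl_vector \<Delta>p = (1/2) *\<^sub>R (\<Sum>\<alpha>\<in>\<Delta>p. \<alpha>)"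

text \<open>Normalized Killing form on h: (t|u) = 1/2 Tr(ad t ad u) = 1/2 sum over roots.\<close>
definition kil :: "(real^'r) set \<Rightarrow> real^'r \<Rightarrow> real^'r \<Rightarrow> real" where
  "kil \<Delta> t u = (1/2) * (\<Sum>\<alpha>\<in>\<Delta>. (\<alpha> \<bullet> t) * (\<alpha> \<bullet> u))"

definition tvec :: "(real^'r) set \<Rightarrow> real^'r \<Rightarrow> real^'r" where
  "tvec \<Delta> w = (THE t. \<forall>u. kil \<Delta> t u = w \<bullet> u)"

definition dform :: "(real^'r) set \<Rightarrow> real^'r \<Rightarrow> real^'r \<Rightarrow> real" where
  "dform \<Delta> w w' = w \<bullet> tvec \<Delta> w'"

definition coroot :: "(real^'r) set \<Rightarrow> real^'r \<Rightarrow> real^'r" where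
  "coroot \<Delta> \<alpha> = (2 / dform \<Delta> \<alpha> \<alpha>) *\<^sub>R tvec \<Delta> \<alpha>"

definition zspan :: "(real^'r) set \<Rightarrow> (real^'r) set" where
  "zspan S = {x. \<exists>k::real^'r \<Rightarrow> int. x = (\<Sum>s\<in>S. of_int (k s) *\<^sub>R s)}"

definition root_lattice :: "(real^'r) set \<Rightarrow> (real^'r) set" where
  "root_lattice \<Delta> = zspan \<Delta>"

definition coroot_lattice :: "(real^'r) set \<Rightarrow> (real^'r) set" where
  "coroot_lattice \<Delta> = zspan (coroot \<Delta> ` \<Delta>)"

text \<open>Fermion index set: r Cartan fermions (Inl j) and one fermion per root (Inr alpha);
  h-weight of each fermion.\<close>
definition fidx :: "(real^'r) set \<Rightarrow> ('r + real^'r) set" where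
  "fidx \<Delta> = range Inl \<union> Inr ` \<Delta>"

fun fwt :: "('r + real^'r) \<Rightarrow> real^'r" where
  "fwt (Inl j) = 0"
| "fwt (Inr \<alpha>) = \<alpha>"

text \<open>c_{NS-}(n,w): states are finite sets of (fermion, k) with k meaning mode k+1/2;
  odd fermion number, L_0 - 1/2 = n, weight w.\<close>
definition cNS :: "(real^'r) set \<Rightarrow> int \<Rightarrow> real^'r \<Rightarrow> nat" where
  "cNS \<Delta> n w = card {S. finite S \<and> S \<subseteq> fidx \<Delta> \<times> UNIV \<and> odd (card S) \<and>
      (\<Sum>(i,k)\<in>S. real k + 1/2) = real_of_int n + 1/2 \<and>
      (\<Sum>(i,k)\<in>S. fwt i) = w}"

text \<open>c_{R+}(n,w): coefficient of q^n e^w in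
  1/2 2^{r/2} e^{-rho} q prod_{m>=1}(1+q^m)^r prod_{alpha>0} prod_{n>=0}(1+q^n e^alpha)
  prod_{k>=1}(1+q^k e^{-alpha}); a monomial is a finite set of (fermion, mode) with
  mode 0 allowed only for positive roots.\<close>
definition cR :: "(real^'r) set \<Rightarrow> (real^'r) set \<Rightarrow> int \<Rightarrow> real^'r \<Rightarrow> real" where
  "cR \<Delta> \<Delta>p n w = (2 powr (real CARD('r) / 2) / 2) *
     real (card {S. finite S \<and> S \<subseteq> fidx \<Delta> \<times> UNIV \<and>
        (\<forall>(i,k)\<in>S. k = 0 \<longrightarrow> (\<exists>\<alpha>\<in>\<Delta>p. i = Inr \<alpha>)) \<and>
        1 + int (\<Sum>(i,k)\<in>S. k) = n \<and>
        - weyl_vector \<Delta>p + (\<Sum>(i,k)\<in>S. fwt i) = w})"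

definition hat_roots :: "(real^'r) set \<Rightarrow> (real^'r) set \<Rightarrow> (int \<times> int \<times> (real^'r)) set" where
  "hat_roots \<Delta> \<Delta>p = {(m,n,w). (m,n,w) \<noteq> (0,0,0) \<and>
     ((w \<in> root_lattice \<Delta> \<and> cNS \<Delta> (m*n) w \<noteq> 0) \<or>
      (w \<in> (\<lambda>q. weyl_vector \<Delta>p + q) ` root_lattice \<Delta> \<and> cR \<Delta> \<Delta>p (m*n) w \<noteq> 0))}"

definition hval :: "int \<Rightarrow> real^'r \<Rightarrow> int \<times> int \<times> (real^'r) \<Rightarrow> real" where
  "hval L \<eta> \<gamma> = (case \<gamma> of (m,n,w) \<Rightarrow> real_of_int (L * (m + n)) + w \<bullet> \<eta>)"

definition norm2 :: "(real^'r) set \<Rightarrow> int \<times> int \<times> (real^'r) \<Rightarrow> real" where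
  "norm2 \<Delta> \<gamma> = (case \<gamma> of (m,n,w) \<Rightarrow> - 2 * real_of_int (m*n) + dform \<Delta> w w)"

end

theory Submission imports Defs begin


lemma dform_pos:
  fixes \<Delta> :: "(real^'r) set"
  assumes rs: "is_root_system \<Delta>" and a: "\<alpha> \<in> \<Delta>"
  shows "dform \<Delta> \<alpha> \<alpha> > 0"
proof -
  have fin: "finite \<Delta>" and z: "0 \<notin> \<Delta>" and sp: "span \<Delta> = UNIV"
    using rs unfolding is_root_system_def by auto
  define K where "K = (\<lambda>t::real^'r. (1/2) *\<^sub>R (\<Sum>\<beta>\<in>\<Delta>. (\<beta> \<bullet> t) *\<^sub>R \<beta>))"
  have kilK: "kil \<Delta> t u = K t \<bullet> u" for t u
    unfolding kil_def K_def by (simp add: inner_sum_left sum_distrib_left algebra_simps)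
  have linK: "linear K"
    by (rule linearI) (simp_all add: K_def inner_add_right scaleR_add_left sum.distrib scaleR_sum_right algebra_simps add_divide_distrib)
  have zero: "t = 0" if "\<forall>\<beta>\<in>\<Delta>. \<beta> \<bullet> t = 0" for t
  proof -
    have "orthogonal t t"
      by (rule orthogonal_to_span) (use that sp in \<open>auto simp: orthogonal_def inner_commute\<close>)
    then show ?thesis by (simp add: orthogonal_def)
  qed
  have kk: "kil \<Delta> t t = (1/2) * (\<Sum>\<beta>\<in>\<Delta>. (\<beta> \<bullet> t)^2)" for t
    unfolding kil_def by (simp add: power2_eq_square)
  have injK: "inj K"
  proof -
    have "t = 0" if "K t = 0" for t
    proof -
      have "(\<Sum>\<beta>\<in>\<Delta>. (\<beta> \<bullet> t)^2) = 0" using kk[of t] kilK[of t t] that by simp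
      then have "\<forall>\<beta>\<in>\<Delta>. (\<beta> \<bullet> t)^2 = 0" using fin by (simp add: sum_nonneg_eq_0_iff)
      then show ?thesis using zero by simp
    qed
    then show ?thesis using linK linear_injective_0 by blast
  qed
  have "surj K" using linK injK linear_injective_imp_surjective by blast
  then obtain t where Kt: "K t = \<alpha>" by (metis surjD)
  have uniq: "t' = t" if "\<forall>u. kil \<Delta> t' u = \<alpha> \<bullet> u" for t'
  proof -
    have "(K t' - \<alpha>) \<bullet> (K t' - \<alpha>) = 0" using that kilK by (simp add: inner_diff_left inner_diff_right)
    then have "K t' = K t" using Kt by simp
    then show ?thesis using injK by (simp add: inj_eq)
  qed
  have tv: "tvec \<Delta> \<alpha> = t"
    unfolding tvec_def
    by (rule the_equality) (use kilK Kt uniq in auto)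
  have t0: "t \<noteq> 0" using Kt a z linK linear_0 by fastforce
  then obtain \<beta> where b: "\<beta> \<in> \<Delta>" "\<beta> \<bullet> t \<noteq> 0" using zero by blast
  have "(\<beta> \<bullet> t)^2 \<le> (\<Sum>\<beta>\<in>\<Delta>. (\<beta> \<bullet> t)^2)" by (rule member_le_sum) (use b fin in auto)
  moreover have "(\<beta> \<bullet> t)^2 > 0" using b by simp
  moreover have "dform \<Delta> \<alpha> \<alpha> = kil \<Delta> t t" unfolding dform_def tv using kilK Kt by (simp add: inner_commute)
  ultimately show ?thesis using kk[of t] by linarith
qed


lemma card_bound:
  fixes S :: "('a \<times> nat) set" and F :: "'a set" and t :: nat
  assumes fF: "finite F" and cF: "card F \<le> 24" and sub: "S \<subseteq> F \<times> UNIV" and fS: "finite S"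
    and sk: "(\<Sum>(i,k)\<in>S. k) \<le> t * t" and t1: "t \<ge> 1"
  shows "card S \<le> 25 * t"
proof -
  define S1 where "S1 = {x\<in>S. snd x < t}"
  define S2 where "S2 = {x\<in>S. \<not> snd x < t}"
  have S1s: "S1 \<subseteq> F \<times> {..<t}" using sub unfolding S1_def by auto
  have "card S1 \<le> card (F \<times> {..<t})" by (rule card_mono) (use fF S1s in auto)
  also have "\<dots> = card F * t" by (simp add: card_cartesian_product)
  also have "\<dots> \<le> 24 * t" using cF by simp
  finally have c1: "card S1 \<le> 24 * t" .
  have "t * card S2 = (\<Sum>x\<in>S2. t)" by simp
  also have "\<dots> \<le> (\<Sum>x\<in>S2. snd x)" by (rule sum_mono) (auto simp: S2_def)
  also have "\<dots> \<le> (\<Sum>x\<in>S. snd x)" by (rule sum_mono2) (use fS in \<open>auto simp: S2_def\<close>)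
  also have "\<dots> = (\<Sum>(i,k)\<in>S. k)" by (simp add: split_beta)
  also have "\<dots> \<le> t * t" by (rule sk)
  finally have "card S2 \<le> t" using t1 by simp
  moreover have "card S = card S1 + card S2"
    unfolding S1_def S2_def using fS by (subst card_Un_disjoint[symmetric]) (auto intro: arg_cong[where f=card])
  ultimately show ?thesis using c1 by simp
qed

lemma wt_bound:
  fixes \<Delta> :: "(real^'r) set"
  assumes fin: "finite \<Delta>" and sub: "S \<subseteq> fidx \<Delta> \<times> UNIV" and fS: "finite S"
  shows "\<bar>(\<Sum>(i,k)\<in>S. fwt i) \<bullet> \<eta>\<bar> \<le> real (card S) * (\<Sum>\<alpha>\<in>\<Delta>. \<bar>\<alpha> \<bullet> \<eta>\<bar>)"
proof -
  have each: "\<bar>fwt (fst x) \<bullet> \<eta>\<bar> \<le> (\<Sum>\<alpha>\<in>\<Delta>. \<bar>\<alpha> \<bullet> \<eta>\<bar>)" if "x \<in> S" for x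
  proof -
    have "fst x \<in> fidx \<Delta>" using that sub by auto
    then consider j where "fst x = Inl j" | \<alpha> where "fst x = Inr \<alpha>" "\<alpha> \<in> \<Delta>" unfolding fidx_def by auto
    then show ?thesis
    proof cases
      case 1 then show ?thesis by (simp add: sum_nonneg)
    next
      case 2 then show ?thesis using fin member_le_sum[of \<alpha> \<Delta> "\<lambda>\<alpha>. \<bar>\<alpha> \<bullet> \<eta>\<bar>"] by auto
    qed
  qed
  have "(\<Sum>(i,k)\<in>S. fwt i) \<bullet> \<eta> = (\<Sum>x\<in>S. fwt (fst x) \<bullet> \<eta>)" by (simp add: split_beta inner_sum_left)
  then have "\<bar>(\<Sum>(i,k)\<in>S. fwt i) \<bullet> \<eta>\<bar> \<le> (\<Sum>x\<in>S. \<bar>fwt (fst x) \<bullet> \<eta>\<bar>)" by (simp add: sum_abs)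
  also have "\<dots> \<le> (\<Sum>x\<in>S. (\<Sum>\<alpha>\<in>\<Delta>. \<bar>\<alpha> \<bullet> \<eta>\<bar>))" by (rule sum_mono) (rule each)
  finally show ?thesis by simp
qed

lemma card_fidx:
  fixes \<Delta> :: "(real^'r) set"
  assumes "finite \<Delta>"
  shows "finite (fidx \<Delta>)" "card (fidx \<Delta>) = CARD('r) + card \<Delta>"
proof -
  show "finite (fidx \<Delta>)" using assms unfolding fidx_def by simp
  show "card (fidx \<Delta>) = CARD('r) + card \<Delta>" unfolding fidx_def
    using assms by (subst card_Un_disjoint) (auto simp: card_image)
qed


lemma root_shape:
  fixes \<Delta> \<Delta>p :: "(real^'r) set"
  assumes mem: "(m,n,w) \<in> hat_roots \<Delta> \<Delta>p"
  shows "\<exists>S c. finite S \<and> S \<subseteq> fidx \<Delta> \<times> UNIV \<and> (c = 0 \<or> c = - weyl_vector \<Delta>p) \<and>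
     w = c + (\<Sum>(i,k)\<in>S. fwt i) \<and> 0 \<le> m*n \<and> int (\<Sum>(i,k)\<in>S. k) \<le> m*n \<and>
     (m = 0 \<and> n = 0 \<longrightarrow> w \<in> \<Delta>)"
proof -
  have nz: "(m,n,w) \<noteq> (0,0,0)" using mem unfolding hat_roots_def by auto
  from mem consider "cNS \<Delta> (m*n) w \<noteq> 0" | "cR \<Delta> \<Delta>p (m*n) w \<noteq> 0" unfolding hat_roots_def by auto
  then show ?thesis
  proof cases
    case 1
    then obtain S where fS: "finite S" and sub: "S \<subseteq> fidx \<Delta> \<times> UNIV" and od: "odd (card S)"
      and eq: "(\<Sum>(i,k)\<in>S. real k + 1/2) = real_of_int (m*n) + 1/2"
      and ww: "(\<Sum>(i,k)\<in>S. fwt i) = w"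
    proof -
      have "{S. finite S \<and> S \<subseteq> fidx \<Delta> \<times> UNIV \<and> odd (card S) \<and>
      (\<Sum>(i,k)\<in>S. real k + 1/2) = real_of_int (m*n) + 1/2 \<and>
      (\<Sum>(i,k)\<in>S. fwt i) = w} \<noteq> {}" using 1 unfolding cNS_def by (metis card.empty)
      then show ?thesis using that by blast
    qed
    have hs: "(\<Sum>(i,k)\<in>S. real k + 1/2) = real (\<Sum>(i,k)\<in>S. k) + real (card S) / 2"
      by (simp add: split_beta sum.distrib)
    have c1: "card S \<ge> 1" using od by (cases "card S") auto
    have e2: "real (\<Sum>(i,k)\<in>S. k) + real (card S) / 2 = real_of_int (m*n) + 1/2" using eq hs by simp
    then have le: "int (\<Sum>(i,k)\<in>S. k) \<le> m*n" using c1 by linarith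
    have nn: "0 \<le> m*n" using le by linarith
    have zz: "w \<in> \<Delta>" if "m = 0" "n = 0"
    proof -
      have r0: "0 \<le> real (\<Sum>(i,k)\<in>S. k)" by (rule of_nat_0_le_iff)
      have r1: "real (card S) \<ge> 1" using c1 by simp
      have "real_of_int (m*n) = 0" using that by simp
      then have "real (card S) = 1" using e2 r0 r1 by linarith
      then have "card S = 1" by simp
      then obtain x where Sx: "S = {x}" by (meson card_1_singletonE)
      have "fst x \<in> fidx \<Delta>" using sub Sx by auto
      moreover have "w = fwt (fst x)" using ww Sx by (simp add: split_beta)
      moreover have "w \<noteq> 0" using nz that by auto
      ultimately show ?thesis unfolding fidx_def by auto
    qed
    have w0: "w = 0 + (\<Sum>(i,k)\<in>S. fwt i)" using ww by simp
    show ?thesis using fS sub w0 nn le zz by blast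
  next
    case 2
    then have c2: "card {S. finite S \<and> S \<subseteq> fidx \<Delta> \<times> UNIV \<and>
        (\<forall>(i,k)\<in>S. k = 0 \<longrightarrow> (\<exists>\<alpha>\<in>\<Delta>p. i = Inr \<alpha>)) \<and>
        1 + int (\<Sum>(i,k)\<in>S. k) = m*n \<and>
        - weyl_vector \<Delta>p + (\<Sum>(i,k)\<in>S. fwt i) = w} \<noteq> 0"
      unfolding cR_def by auto
    then obtain S where fS: "finite S" and sub: "S \<subseteq> fidx \<Delta> \<times> UNIV"
      and eq: "1 + int (\<Sum>(i,k)\<in>S. k) = m*n"
      and ww: "- weyl_vector \<Delta>p + (\<Sum>(i,k)\<in>S. fwt i) = w"
    proof -
      have "{S. finite S \<and> S \<subseteq> fidx \<Delta> \<times> UNIV \<and>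
        (\<forall>(i,k)\<in>S. k = 0 \<longrightarrow> (\<exists>\<alpha>\<in>\<Delta>p. i = Inr \<alpha>)) \<and>
        1 + int (\<Sum>(i,k)\<in>S. k) = m*n \<and>
        - weyl_vector \<Delta>p + (\<Sum>(i,k)\<in>S. fwt i) = w} \<noteq> {}" using c2 by (metis card.empty)
      then show ?thesis using that by blast
    qed
    have p0: "0 \<le> int (\<Sum>(i,k)\<in>S. k)" by (rule of_nat_0_le_iff)
    have "m*n \<ge> 1" using eq p0 by linarith
    then have n00: "\<not> (m = 0 \<and> n = 0)" by auto
    have le: "int (\<Sum>(i,k)\<in>S. k) \<le> m*n" and nn: "0 \<le> m*n" using eq by linarith+
    have w0: "w = - weyl_vector \<Delta>p + (\<Sum>(i,k)\<in>S. fwt i)" using ww by simp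
    show ?thesis using fS sub w0 nn le n00 by blast
  qed
qed


lemma root_bound:
  fixes \<Delta> \<Delta>p :: "(real^'r) set"
  assumes mem: "(m,n,w) \<in> hat_roots \<Delta> \<Delta>p" and fin: "finite \<Delta>"
    and c24: "card \<Delta> + CARD('r) = 24" and nz: "\<not> (m = 0 \<and> n = 0)"
  shows "0 \<le> m*n \<and> \<bar>w \<bullet> \<eta>\<bar> \<le> (\<bar>weyl_vector \<Delta>p \<bullet> \<eta>\<bar> + 25 * (\<Sum>\<alpha>\<in>\<Delta>. \<bar>\<alpha> \<bullet> \<eta>\<bar>)) * real_of_int (\<bar>m\<bar> + \<bar>n\<bar>)"
proof -
  obtain S c where fS: "finite S" and sub: "S \<subseteq> fidx \<Delta> \<times> UNIV" and cc: "c = 0 \<or> c = - weyl_vector \<Delta>p"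
    and ww: "w = c + (\<Sum>(i,k)\<in>S. fwt i)" and nn: "0 \<le> m*n" and le: "int (\<Sum>(i,k)\<in>S. k) \<le> m*n"
    using root_shape[OF mem] by blast
  define M where "M = (\<Sum>\<alpha>\<in>\<Delta>. \<bar>\<alpha> \<bullet> \<eta>\<bar>)"
  define R0 where "R0 = \<bar>weyl_vector \<Delta>p \<bullet> \<eta>\<bar>"
  have M0: "M \<ge> 0" unfolding M_def by (simp add: sum_nonneg)
  define t where "t = nat (\<bar>m\<bar> + \<bar>n\<bar>)"
  have ti: "int t = \<bar>m\<bar> + \<bar>n\<bar>" unfolding t_def by simp
  have t1: "t \<ge> 1" using nz ti by linarith
  have "m*n \<le> \<bar>m\<bar> * \<bar>n\<bar>" by (metis abs_ge_self abs_mult)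
  also have "\<dots> \<le> (\<bar>m\<bar> + \<bar>n\<bar>) * (\<bar>m\<bar> + \<bar>n\<bar>)" by (intro mult_mono) simp_all
  finally have mm: "m*n \<le> (\<bar>m\<bar> + \<bar>n\<bar>) * (\<bar>m\<bar> + \<bar>n\<bar>)" .
  have "int (t * t) = (\<bar>m\<bar> + \<bar>n\<bar>) * (\<bar>m\<bar> + \<bar>n\<bar>)" using ti by (simp only: of_nat_mult)
  then have "int (\<Sum>(i,k)\<in>S. k) \<le> int (t * t)" using le mm by linarith
  then have sk: "(\<Sum>(i,k)\<in>S. k) \<le> t * t" by linarith
  have cS: "card S \<le> 25 * t"
    by (rule card_bound[OF card_fidx(1)[OF fin] _ sub fS sk t1]) (use c24 card_fidx(2)[OF fin] in simp)
  have cb: "\<bar>c \<bullet> \<eta>\<bar> \<le> R0" using cc unfolding R0_def by auto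
  have sb: "\<bar>(\<Sum>(i,k)\<in>S. fwt i) \<bullet> \<eta>\<bar> \<le> real (card S) * M"
    unfolding M_def by (rule wt_bound[OF fin sub fS])
  have "real (card S) * M \<le> real (25 * t) * M" using cS M0 by (intro mult_right_mono) auto
  have "\<bar>w \<bullet> \<eta>\<bar> \<le> \<bar>c \<bullet> \<eta>\<bar> + \<bar>(\<Sum>(i,k)\<in>S. fwt i) \<bullet> \<eta>\<bar>" unfolding ww inner_add_left by (rule abs_triangle_ineq)
  also have "\<dots> \<le> R0 + real (25 * t) * M" using cb sb \<open>real (card S) * M \<le> real (25 * t) * M\<close> by linarith
  also have "\<dots> \<le> R0 * real t + 25 * M * real t"
  proof -
    have "R0 \<le> R0 * real t" using t1 unfolding R0_def by (simp add: mult_le_cancel_left1)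
    then show ?thesis by simp
  qed
  also have "\<dots> = (R0 + 25 * M) * real_of_int (\<bar>m\<bar> + \<bar>n\<bar>)"
  proof -
    have "real t = real_of_int (\<bar>m\<bar> + \<bar>n\<bar>)" using ti by (metis of_int_of_nat_eq)
    then show ?thesis by (simp add: algebra_simps)
  qed
  finally show ?thesis using nn unfolding R0_def M_def by blast
qed

lemma root_fin:
  fixes \<Delta> \<Delta>p :: "(real^'r) set"
  assumes mem: "(m,n,w) \<in> hat_roots \<Delta> \<Delta>p"
  shows "w \<in> \<Delta> \<or> (\<exists>S c. (c = 0 \<or> c = - weyl_vector \<Delta>p) \<and> S \<subseteq> fidx \<Delta> \<times> {..nat (m*n)} \<and>
     w = c + (\<Sum>(i,k)\<in>S. fwt i))"
proof -
  obtain S c where fS: "finite S" and sub: "S \<subseteq> fidx \<Delta> \<times> UNIV" and cc: "c = 0 \<or> c = - weyl_vector \<Delta>p"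
    and ww: "w = c + (\<Sum>(i,k)\<in>S. fwt i)" and nn: "0 \<le> m*n" and le: "int (\<Sum>(i,k)\<in>S. k) \<le> m*n"
    using root_shape[OF mem] by blast
  have "S \<subseteq> fidx \<Delta> \<times> {..nat (m*n)}"
  proof
    fix x assume x: "x \<in> S"
    have "snd x \<le> (\<Sum>y\<in>S. snd y)" by (rule member_le_sum) (use x fS in auto)
    also have "\<dots> = (\<Sum>(i,k)\<in>S. k)" by (simp add: split_beta)
    finally have "int (snd x) \<le> m*n" using le by linarith
    then have "snd x \<le> nat (m*n)" by linarith
    then show "x \<in> fidx \<Delta> \<times> {..nat (m*n)}" using x sub by (auto simp: mem_Times_iff)
  qed
  then show ?thesis using cc ww by blast
qed


lemma zero_root:
  fixes \<Delta> \<Delta>p :: "(real^'r) set"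
  assumes "(0,0,w) \<in> hat_roots \<Delta> \<Delta>p" shows "w \<in> \<Delta>"
  using root_shape[OF assms] by auto

theorem mainTheorem1:
  fixes \<Delta> \<Delta>p :: "(real^'r) set" and \<eta> :: "real^'r"
  assumes "is_root_system \<Delta>"
    and "card \<Delta> + CARD('r) = 24"
    and "is_pos_system \<Delta> \<Delta>p"
    and "\<eta> \<in> coroot_lattice \<Delta>"
    and "\<forall>\<alpha>\<in>\<Delta>. \<alpha> \<bullet> \<eta> \<noteq> 0"
  shows "\<exists>L::int. L > 0 \<and>
    (\<forall>\<gamma>\<in>hat_roots \<Delta> \<Delta>p. hval L \<eta> \<gamma> \<noteq> 0) \<and>
    (\<forall>m n w. (m,n,w) \<in> hat_roots \<Delta> \<Delta>p \<and> (m > 0 \<or> n > 0) \<longrightarrow> hval L \<eta> (m,n,w) > 0) \<and>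
    (\<forall>N::real. N > 0 \<longrightarrow>
       finite {\<gamma>\<in>hat_roots \<Delta> \<Delta>p. 0 < \<bar>hval L \<eta> \<gamma>\<bar> \<and> \<bar>hval L \<eta> \<gamma>\<bar> < N}) \<and>
    (\<forall>\<alpha>\<in>hat_roots \<Delta> \<Delta>p. \<forall>w'. norm2 \<Delta> \<alpha> = 0 \<and> (0,0,w') \<in> hat_roots \<Delta> \<Delta>p \<longrightarrow>
       \<bar>hval L \<eta> \<alpha>\<bar> > \<bar>hval L \<eta> (0,0,w')\<bar>)"
proof -
  have fin: "finite \<Delta>" using assms(1) unfolding is_root_system_def by auto
  define M where "M = (\<Sum>\<alpha>\<in>\<Delta>. \<bar>\<alpha> \<bullet> \<eta>\<bar>)"
  define \<rho> where "\<rho> = weyl_vector \<Delta>p"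
  define A where "A = \<bar>\<rho> \<bullet> \<eta>\<bar> + 25 * M"
  define L where "L = \<lceil>A + M\<rceil> + 1"
  have M0: "M \<ge> 0" unfolding M_def by (simp add: sum_nonneg)
  have A0: "A \<ge> 0" unfolding A_def using M0 by simp
  have LA: "real_of_int L - A \<ge> M + 1" unfolding L_def by linarith
  have Lpos: "L > 0" using LA A0 M0 by linarith
  have Mb: "\<bar>\<alpha> \<bullet> \<eta>\<bar> \<le> M" if "\<alpha> \<in> \<Delta>" for \<alpha>
    unfolding M_def using member_le_sum[of \<alpha> \<Delta> "\<lambda>\<alpha>. \<bar>\<alpha> \<bullet> \<eta>\<bar>"] fin that by auto
  have hv: "hval L \<eta> (m,n,w) = real_of_int L * real_of_int (m + n) + w \<bullet> \<eta>" for m n w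
    unfolding hval_def by simp
  have key: "(0 \<le> m \<and> 0 \<le> n \<and> hval L \<eta> (m,n,w) \<ge> (real_of_int L - A) * real_of_int (\<bar>m\<bar> + \<bar>n\<bar>)) \<or>
             (m \<le> 0 \<and> n \<le> 0 \<and> hval L \<eta> (m,n,w) \<le> - ((real_of_int L - A) * real_of_int (\<bar>m\<bar> + \<bar>n\<bar>)))"
    if mem: "(m,n,w) \<in> hat_roots \<Delta> \<Delta>p" and nz: "\<not> (m = 0 \<and> n = 0)" for m n w
  proof -
    have rb: "0 \<le> m*n" "\<bar>w \<bullet> \<eta>\<bar> \<le> A * real_of_int (\<bar>m\<bar> + \<bar>n\<bar>)"
      using root_bound[OF mem fin assms(2) nz, of \<eta>] unfolding A_def M_def \<rho>_def by auto
    from rb(1) have "(0 \<le> m \<and> 0 \<le> n) \<or> (m \<le> 0 \<and> n \<le> 0)" by (auto simp: zero_le_mult_iff)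
    then show ?thesis
    proof
      assume s: "0 \<le> m \<and> 0 \<le> n"
      then have e: "real_of_int (\<bar>m\<bar> + \<bar>n\<bar>) = real_of_int (m + n)" by simp
      have "hval L \<eta> (m,n,w) = real_of_int L * real_of_int (\<bar>m\<bar> + \<bar>n\<bar>) + w \<bullet> \<eta>" using hv e by simp
      then have "hval L \<eta> (m,n,w) \<ge> (real_of_int L - A) * real_of_int (\<bar>m\<bar> + \<bar>n\<bar>)"
        using rb(2) by (simp add: algebra_simps, linarith?)
      then show ?thesis using s by blast
    next
      assume s: "m \<le> 0 \<and> n \<le> 0"
      then have e: "real_of_int (\<bar>m\<bar> + \<bar>n\<bar>) = - real_of_int (m + n)" by simp
      have "hval L \<eta> (m,n,w) = - (real_of_int L * real_of_int (\<bar>m\<bar> + \<bar>n\<bar>)) + w \<bullet> \<eta>"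
        by (simp only: hv e)
      then have "hval L \<eta> (m,n,w) \<le> - ((real_of_int L - A) * real_of_int (\<bar>m\<bar> + \<bar>n\<bar>))"
        using rb(2) by (simp add: algebra_simps, linarith?)
      then show ?thesis using s by blast
    qed
  qed
  have absk: "\<bar>hval L \<eta> (m,n,w)\<bar> \<ge> (real_of_int L - A) * real_of_int (\<bar>m\<bar> + \<bar>n\<bar>)"
    if mem: "(m,n,w) \<in> hat_roots \<Delta> \<Delta>p" and nz: "\<not> (m = 0 \<and> n = 0)" for m n w
    using key[OF mem nz] by linarith
  have big: "(real_of_int L - A) * real_of_int (\<bar>m\<bar> + \<bar>n\<bar>) \<ge> real_of_int L - A"
    if nz: "\<not> (m = 0 \<and> n = 0)" for m n :: int
  proof -
    have "real_of_int (\<bar>m\<bar> + \<bar>n\<bar>) \<ge> 1" using nz by linarith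
    then show ?thesis using LA M0 by (simp add: mult_le_cancel_left1)
  qed
  have c1: "hval L \<eta> \<gamma> \<noteq> 0" if mem: "\<gamma> \<in> hat_roots \<Delta> \<Delta>p" for \<gamma>
  proof -
    obtain m n w where g: "\<gamma> = (m,n,w)" by (cases \<gamma>) auto
    show ?thesis
    proof (cases "m = 0 \<and> n = 0")
      case True
      then have "w \<in> \<Delta>" using zero_root mem g by blast
      then show ?thesis using assms(5) g True hv by simp
    next
      case False
      have mem': "(m,n,w) \<in> hat_roots \<Delta> \<Delta>p" using mem g by simp
      have "\<bar>hval L \<eta> (m,n,w)\<bar> > 0" using absk[OF mem' False] big[OF False] LA M0 by linarith
      then show ?thesis using g by auto
    qed
  qed
  have c2: "hval L \<eta> (m,n,w) > 0" if mem: "(m,n,w) \<in> hat_roots \<Delta> \<Delta>p" and p: "m > 0 \<or> n > 0" for m n w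
  proof -
    have nz: "\<not> (m = 0 \<and> n = 0)" using p by auto
    show ?thesis using key[OF mem nz] big[OF nz] p LA M0 by linarith
  qed
  have c3: "finite {\<gamma>\<in>hat_roots \<Delta> \<Delta>p. 0 < \<bar>hval L \<eta> \<gamma>\<bar> \<and> \<bar>hval L \<eta> \<gamma>\<bar> < N}" if N0: "N > 0" for N :: real
  proof -
    define B where "B = nat \<lceil>N\<rceil>"
    define W where "W = (\<lambda>(c,S). c + (\<Sum>(i,k)\<in>S. fwt i)) ` ({0, - \<rho>} \<times> Pow (fidx \<Delta> \<times> {..B*B}))"
    have fW: "finite W" unfolding W_def using card_fidx(1)[OF fin] by simp
    have sub: "{\<gamma>\<in>hat_roots \<Delta> \<Delta>p. 0 < \<bar>hval L \<eta> \<gamma>\<bar> \<and> \<bar>hval L \<eta> \<gamma>\<bar> < N}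
       \<subseteq> {-int B..int B} \<times> {-int B..int B} \<times> (\<Delta> \<union> W)"
    proof
      fix \<gamma> assume gm: "\<gamma> \<in> {\<gamma>\<in>hat_roots \<Delta> \<Delta>p. 0 < \<bar>hval L \<eta> \<gamma>\<bar> \<and> \<bar>hval L \<eta> \<gamma>\<bar> < N}"
      obtain m n w where g: "\<gamma> = (m,n,w)" by (cases \<gamma>) auto
      have mem: "(m,n,w) \<in> hat_roots \<Delta> \<Delta>p" and lt: "\<bar>hval L \<eta> (m,n,w)\<bar> < N" using gm g by auto
      have bd: "\<bar>m\<bar> \<le> int B \<and> \<bar>n\<bar> \<le> int B"
      proof (cases "m = 0 \<and> n = 0")
        case True then show ?thesis by simp
      next
        case False
        have "(real_of_int L - A) * real_of_int (\<bar>m\<bar> + \<bar>n\<bar>) < N" using absk[OF mem False] lt by linarith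
        moreover have "real_of_int (\<bar>m\<bar> + \<bar>n\<bar>) \<le> (real_of_int L - A) * real_of_int (\<bar>m\<bar> + \<bar>n\<bar>)"
          using LA M0 by (intro mult_le_cancel_right1[THEN iffD2]) auto
        ultimately have "real_of_int (\<bar>m\<bar> + \<bar>n\<bar>) < N" by linarith
        then have "\<bar>m\<bar> + \<bar>n\<bar> \<le> \<lceil>N\<rceil>" by linarith
        then show ?thesis unfolding B_def using N0 by linarith
      qed
      have "m * n \<le> \<bar>m\<bar> * \<bar>n\<bar>" by (metis abs_ge_self abs_mult)
      also have "\<dots> \<le> int B * int B" using bd by (intro mult_mono) simp_all
      finally have mnB: "nat (m*n) \<le> B * B" by (simp add: nat_le_iff)
      have "w \<in> \<Delta> \<union> W"
        using root_fin[OF mem]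
      proof
        assume "w \<in> \<Delta>" then show ?thesis by simp
      next
        assume "\<exists>S c. (c = 0 \<or> c = - weyl_vector \<Delta>p) \<and> S \<subseteq> fidx \<Delta> \<times> {..nat (m*n)} \<and> w = c + (\<Sum>(i,k)\<in>S. fwt i)"
        then obtain S c where cc: "c = 0 \<or> c = - \<rho>" and sS: "S \<subseteq> fidx \<Delta> \<times> {..nat (m*n)}" and ww: "w = c + (\<Sum>(i,k)\<in>S. fwt i)"
          unfolding \<rho>_def by blast
        have "S \<subseteq> fidx \<Delta> \<times> {..B*B}" using sS mnB by auto
        then have "(c,S) \<in> {0, - \<rho>} \<times> Pow (fidx \<Delta> \<times> {..B*B})" using cc by auto
        then have "w \<in> W" unfolding W_def ww by (rule rev_image_eqI) simp
        then show ?thesis by simp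
      qed
      then show "\<gamma> \<in> {-int B..int B} \<times> {-int B..int B} \<times> (\<Delta> \<union> W)" using g bd by auto
    qed
    show ?thesis by (rule finite_subset[OF sub]) (use fin fW in simp)
  qed
  have c4: "\<bar>hval L \<eta> \<alpha>\<bar> > \<bar>hval L \<eta> (0,0,w')\<bar>"
    if mem: "\<alpha> \<in> hat_roots \<Delta> \<Delta>p" and n0: "norm2 \<Delta> \<alpha> = 0" and m0: "(0,0,w') \<in> hat_roots \<Delta> \<Delta>p" for \<alpha> w'
  proof -
    obtain m n w where g: "\<alpha> = (m,n,w)" by (cases \<alpha>) auto
    have w'D: "w' \<in> \<Delta>" using zero_root m0 by blast
    have h0: "\<bar>hval L \<eta> (0,0,w')\<bar> \<le> M" using hv Mb[OF w'D] by simp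
    show ?thesis
    proof (cases "m = 0 \<and> n = 0")
      case True
      then have "w \<in> \<Delta>" using zero_root mem g by blast
      then have "dform \<Delta> w w > 0" by (rule dform_pos[OF assms(1)])
      moreover have "norm2 \<Delta> \<alpha> = dform \<Delta> w w" using g True unfolding norm2_def by simp
      ultimately show ?thesis using n0 by simp
    next
      case False
      have mem': "(m,n,w) \<in> hat_roots \<Delta> \<Delta>p" using mem g by simp
      have "\<bar>hval L \<eta> (m,n,w)\<bar> > M" using absk[OF mem' False] big[OF False] LA by linarith
      then show ?thesis using g h0 by auto
    qed
  qed
  show ?thesis
    by (rule exI[of _ L]) (use Lpos c1 c2 c3 c4 in blast)
qed

end
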